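(* Let $k>\ell\ge1$, $m\ge1$ and $w=a^kba^\ell b^m$. For every $u\in L^{\epsilon}_{\vdash_{\{w\}}}$ and every nonempty prefix $p$ of $u$, $\nu(p)\ge \frac{k+\ell}{m+1}$, where $\nu(p)=|p|_a/|p|_b$ (with $\nu(p)=\infty$ if $|p|_b=0$).
   Context: $|u|_c$ is the number of occurrences of letter $c$ in $u$. For words $u,v$, the shuffle $u \sqcup\!\sqcup v$ is the set of all words $u_1v_1\cdots u_kv_k$ with $k\ge 1$, $u=u_1\cdots u_k$, $v=v_1\cdots v_k$ (pieces possibly empty). For a finite set $I$ of words, $v \vdash_I w$ means $w \in v \sqcup\!\sqcup u$ for some $u\in I$; $\vdash_I^*$ is its reflexive-transitive closure and $L^{\epsilon}_{\vdash_I}=\{w : \epsilon \vdash_I^* w\}$. *)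

theory Defs
  imports Main "HOL-Library.Extended_Real"
begin

datatype letter = a | b

definition occ :: "'c list \<Rightarrow> 'c \<Rightarrow> nat" where
  "occ u c = count_list u c"

definition shuffle :: "'c list \<Rightarrow> 'c list \<Rightarrow> 'c list set" where
  "shuffle u v = {concat (map (\<lambda>(x, y). x @ y) (zip us vs)) | us vs.
       length us = length vs \<and> length us \<ge> 1 \<and> concat us = u \<and> concat vs = v}"

definition derives1 :: "'c list set \<Rightarrow> 'c list \<Rightarrow> 'c list \<Rightarrow> bool" where
  "derives1 I v w \<longleftrightarrow> (\<exists>u\<in>I. w \<in> shuffle v u)"

definition L_eps :: "'c list set \<Rightarrow> 'c list set" where
  "L_eps I = {w. (derives1 I)\<^sup>*\<^sup>* [] w}"

definition nu :: "letter list \<Rightarrow> ereal" where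
  "nu p = (if occ p b = 0 then \<infinity> else ereal (real (occ p a) / real (occ p b)))"

end

theory Submission
  imports Defs
begin

definition gw :: "int \<Rightarrow> int \<Rightarrow> letter list \<Rightarrow> int" where
  "gw dd cc x = dd * int (count_list x a) - cc * int (count_list x b)"

definition gf :: "int \<Rightarrow> int \<Rightarrow> int \<Rightarrow> letter list \<Rightarrow> bool" where
  "gf dd cc c x \<longleftrightarrow> (\<forall>p s. x = p @ s \<longrightarrow> 0 \<le> c + gw dd cc p)"

lemma gw_app[simp]: "gw dd cc (x @ y) = gw dd cc x + gw dd cc y"
  by (simp add: gw_def algebra_simps)

lemma gw_nil[simp]: "gw dd cc [] = 0"
  by (simp add: gw_def)

lemma gf_nil: "gf dd cc c [] \<longleftrightarrow> 0 \<le> c"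
  by (simp add: gf_def)

lemma gf_nonneg: "gf dd cc c x \<Longrightarrow> 0 \<le> c"
  unfolding gf_def by (metis append_Nil add_0_right gw_nil)

lemma gf_app: "gf dd cc c (x @ y) \<longleftrightarrow> gf dd cc c x \<and> gf dd cc (c + gw dd cc x) y"
proof
  assume h: "gf dd cc c (x @ y)"
  show "gf dd cc c x \<and> gf dd cc (c + gw dd cc x) y"
  proof
    show "gf dd cc c x" unfolding gf_def
    proof (intro allI impI)
      fix p s assume "x = p @ s"
      then have "x @ y = p @ (s @ y)" by simp
      then show "0 \<le> c + gw dd cc p" using h unfolding gf_def by blast
    qed
    show "gf dd cc (c + gw dd cc x) y" unfolding gf_def
    proof (intro allI impI)
      fix p s assume "y = p @ s"
      then have "x @ y = (x @ p) @ s" by simp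
      then have "0 \<le> c + gw dd cc (x @ p)" using h unfolding gf_def by blast
      then show "0 \<le> c + gw dd cc x + gw dd cc p" by simp
    qed
  qed
next
  assume h: "gf dd cc c x \<and> gf dd cc (c + gw dd cc x) y"
  show "gf dd cc c (x @ y)" unfolding gf_def
  proof (intro allI impI)
    fix p s assume "x @ y = p @ s"
    then obtain us where "(x = p @ us \<and> us @ y = s) \<or> (x @ us = p \<and> y = us @ s)"
      by (auto simp: append_eq_append_conv2)
    then show "0 \<le> c + gw dd cc p"
    proof
      assume "x = p @ us \<and> us @ y = s" then show ?thesis using h unfolding gf_def by blast
    next
      assume hh: "x @ us = p \<and> y = us @ s"
      then have "0 \<le> c + gw dd cc x + gw dd cc us" using h unfolding gf_def by blast
      then show ?thesis using hh by auto
    qed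
  qed
qed

lemma gf_single: "gf dd cc c [x] \<longleftrightarrow> 0 \<le> c \<and> 0 \<le> c + gw dd cc [x]"
  unfolding gf_def by (auto simp: Cons_eq_append_conv)

lemma gf_rep: "0 \<le> c \<Longrightarrow> 0 \<le> c + int n * gw dd cc [x] \<Longrightarrow> gf dd cc c (replicate n x)"
proof (induction n arbitrary: c)
  case 0 then show ?case by (simp add: gf_nil)
next
  case (Suc n)
  have e: "replicate (Suc n) x = [x] @ replicate n x" by simp
  have c1: "0 \<le> c + gw dd cc [x]"
  proof (cases "0 \<le> gw dd cc [x]")
    case True then show ?thesis using Suc by simp
  next
    case False
    then have "int (Suc n) * gw dd cc [x] \<le> gw dd cc [x]"
      by (simp add: algebra_simps mult_le_0_iff)
    then show ?thesis using Suc by simp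
  qed
  have "gf dd cc (c + gw dd cc [x]) (replicate n x)"
    using Suc c1 by (intro Suc.IH) (auto simp: algebra_simps)
  then show ?case unfolding e gf_app using c1 Suc by (simp add: gf_single)
qed

lemma gf_shuffle:
  "length us = length vs \<Longrightarrow> gf dd cc c1 (concat us) \<Longrightarrow> gf dd cc c2 (concat vs)
   \<Longrightarrow> gf dd cc (c1 + c2) (concat (map (\<lambda>(x, y). x @ y) (zip us vs)))"
proof (induction us arbitrary: vs c1 c2)
  case Nil then show ?case by (simp add: gf_nil gf_nonneg)
next
  case (Cons x us)
  then obtain y vs' where vs: "vs = y # vs'" by (cases vs) auto
  have hx: "gf dd cc c1 x" "gf dd cc (c1 + gw dd cc x) (concat us)"
    using Cons.prems(2) by (auto simp: gf_app)
  have hy: "gf dd cc c2 y" "gf dd cc (c2 + gw dd cc y) (concat vs')"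
    using Cons.prems(3) vs by (auto simp: gf_app)
  have c2: "0 \<le> c2" using hy(1) gf_nonneg by blast
  have x0: "0 \<le> c1 + gw dd cc x" using hx(2) gf_nonneg by blast
  have A: "gf dd cc (c1 + c2) x" using hx(1) c2 unfolding gf_def by fastforce
  have B: "gf dd cc (c1 + c2 + gw dd cc x) y" using hy(1) x0 unfolding gf_def by fastforce
  have C: "gf dd cc ((c1 + gw dd cc x) + (c2 + gw dd cc y)) (concat (map (\<lambda>(x, y). x @ y) (zip us vs')))"
    using Cons.IH[OF _ hx(2) hy(2)] Cons.prems(1) vs by simp
  show ?case using A B C vs by (simp add: gf_app algebra_simps)
qed

theorem lemma5:
  fixes k l m :: nat and u p :: "letter list"
  assumes "k > l" and "l \<ge> 1" and "m \<ge> 1"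
    and "u \<in> L_eps {replicate k a @ [b] @ replicate l a @ replicate m b}"
    and "\<exists>s. u = p @ s" and "p \<noteq> []"
  shows "nu p \<ge> ereal (real (k + l) / real (m + 1))"
proof -
  define dd where "dd = int m + 1"
  define cc where "cc = int k + int l"
  let ?w = "replicate k a @ [b] @ replicate l a @ replicate m b"
  have ga: "gw dd cc [a] = dd" and gb: "gw dd cc [b] = - cc" by (simp_all add: gw_def)
  have gwr: "gw dd cc (replicate n x) = int n * gw dd cc [x]" for n x
  proof (induction n)
    case (Suc n)
    have "replicate (Suc n) x = [x] @ replicate n x" by simp
    then have "gw dd cc (replicate (Suc n) x) = gw dd cc [x] + gw dd cc (replicate n x)"
      by (metis gw_app)
    then show ?case using Suc by (simp add: algebra_simps)
  qed simp
  have gw: "gf dd cc 0 ?w"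
  proof -
    have d0: "0 < dd" by (simp add: dd_def)
    have e1: "int k * dd - cc = int k * int m - int l" by (simp add: dd_def cc_def algebra_simps)
    have km: "int k \<le> int k * int m" proof - have "k * 1 \<le> k * m" using assms(3) by (rule mult_le_mono2) then show ?thesis by (metis mult_1_right of_nat_le_iff of_nat_mult) qed
    have e2: "int k * dd - cc + int l * dd - int m * cc = 0" by (simp add: dd_def cc_def algebra_simps)
    have kd: "0 \<le> int k * dd" using d0 by simp
    have ld: "0 \<le> int l * dd" using d0 by simp
    have 1: "gf dd cc 0 (replicate k a)" by (rule gf_rep) (simp_all add: ga kd)
    have 2: "gf dd cc (int k * dd) [b]" unfolding gf_single gb using kd e1 km assms(1) by linarith
    have 3: "gf dd cc (int k * dd - cc) (replicate l a)"
      using e1 km assms(1) ld by (intro gf_rep; simp only: ga; linarith)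
    have 4: "gf dd cc (int k * dd - cc + int l * dd) (replicate m b)"
      using e1 e2 km assms(1) ld by (intro gf_rep; simp only: gb; linarith)
    have "gf dd cc 0 (replicate k a @ ([b] @ (replicate l a @ replicate m b)))"
      unfolding gf_app gwr ga gb using 1 2 3 4 by (simp add: algebra_simps)
    then show ?thesis by simp
  qed
  have "(derives1 {?w})\<^sup>*\<^sup>* [] u" using assms(4) by (simp add: L_eps_def)
  then have "gf dd cc 0 u"
  proof (induction rule: rtranclp_induct)
    case base then show ?case by (simp add: gf_nil)
  next
    case (step v w')
    then obtain us vs where "w' = concat (map (\<lambda>(x, y). x @ y) (zip us vs))"
      "length us = length vs" "concat us = v" "concat vs = ?w"
      by (auto simp: derives1_def shuffle_def)
    then show ?case using gf_shuffle[of us vs dd cc 0 0] step.IH gw by simp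
  qed
  then have "0 \<le> gw dd cc p" using assms(5) unfolding gf_def by auto
  then have key: "real (k + l) * real (occ p b) \<le> real (m + 1) * real (occ p a)"
    unfolding gw_def dd_def cc_def occ_def by (simp add: algebra_simps) (metis of_int_le_iff of_int_of_nat_eq of_nat_add of_nat_mult)
  show ?thesis
  proof (cases "occ p b = 0")
    case True then show ?thesis by (simp add: nu_def)
  next
    case False
    then have "real (k + l) / real (m + 1) \<le> real (occ p a) / real (occ p b)"
      using key by (simp add: divide_simps algebra_simps del: of_nat_add)
    then show ?thesis using False by (simp add: nu_def)
  qed
qed

end
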